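(* Consider the problem $1|p\text{-}batch,v_i,incompatible|\sum w_iC_i$ defined as follows. Let $N=\{1,\ldots,n\}$ be a set of jobs partitioned into families $N_1,\ldots,N_m$ (pairwise disjoint, union $N$). Each job $i$ has a weight $w_i\ge 0$, a size $v_i$ with $0\le v_i\le V$, and processing time $p_i=q_j>0$ for all $i\in N_j$. A single machine of capacity $V$ processes batches: a batch is a set of jobs from a single family whose total size is at most $V$; a batch of family $j$ occupies the machine for $q_j$ time units without interruption, the machine processes at most one batch at a time, every job belongs to exactly one batch, and each job's completion time $C_i$ equals the completion time of its batch. The objective is to minimize $\sum_{i\in N} w_iC_i$. For each family $j$, order the jobs of $N_j$ in non-increasing order of size and load them greedily in that order until the remaining capacity is insufficient for the next job; let $N_j^b$ be the number of jobs so loaded, and let $B_j=\lceil |N_j|/N_j^b\rceil$. Then there exists an optimal solution in which, for every family $j$, the number of batches containing jobs of family $j$ is at most $B_j$.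
   Context: Any $N_j^b$ jobs of $N_j$ together have total size at most $V$ (since the $N_j^b$ largest jobs of $N_j$ fit). The weights $w_i$ are assumed nonnegative (in the paper they are drawn from positive integers). *)

theory Defs
  imports Main "HOL.Real"
begin

text \<open>Jobs are 1..n; f i is the family of job i; q j the processing time of family j;
  v i the size and w i the weight of job i; V the machine capacity.
  A schedule is a list of batches, each given as (set of jobs, start time).\<close>

definition fam_jobs :: "nat \<Rightarrow> (nat \<Rightarrow> nat) \<Rightarrow> nat \<Rightarrow> nat set" where
  "fam_jobs n f j = {i \<in> {1..n}. f i = j}"

definition feasible ::
  "nat \<Rightarrow> (nat \<Rightarrow> nat) \<Rightarrow> (nat \<Rightarrow> real) \<Rightarrow> (nat \<Rightarrow> real) \<Rightarrow> real \<Rightarrow> (nat set \<times> real) list \<Rightarrow> bool" where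
  "feasible n f q v V S \<longleftrightarrow>
     (\<forall>k<length S. fst (S!k) \<noteq> {} \<and> fst (S!k) \<subseteq> {1..n}
        \<and> (\<forall>i\<in>fst (S!k). \<forall>i'\<in>fst (S!k). f i = f i')
        \<and> (\<Sum>i\<in>fst (S!k). v i) \<le> V
        \<and> 0 \<le> snd (S!k))
   \<and> (\<Union>k<length S. fst (S!k)) = {1..n}
   \<and> (\<forall>k<length S. \<forall>l<length S. k \<noteq> l \<longrightarrow>
        fst (S!k) \<inter> fst (S!l) = {}
        \<and> (\<forall>i\<in>fst (S!k). \<forall>i'\<in>fst (S!l).
              snd (S!k) + q (f i) \<le> snd (S!l) \<or> snd (S!l) + q (f i') \<le> snd (S!k)))"

definition cost ::
  "(nat \<Rightarrow> real) \<Rightarrow> (nat \<Rightarrow> nat) \<Rightarrow> (nat \<Rightarrow> real) \<Rightarrow> (nat set \<times> real) list \<Rightarrow> real" where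
  "cost w f q S = (\<Sum>k<length S. \<Sum>i\<in>fst (S!k). w i * (snd (S!k) + q (f i)))"

definition optimal ::
  "nat \<Rightarrow> (nat \<Rightarrow> nat) \<Rightarrow> (nat \<Rightarrow> real) \<Rightarrow> (nat \<Rightarrow> real) \<Rightarrow> (nat \<Rightarrow> real) \<Rightarrow> real \<Rightarrow> (nat set \<times> real) list \<Rightarrow> bool" where
  "optimal n f q v w V S \<longleftrightarrow> feasible n f q v V S \<and>
     (\<forall>S'. feasible n f q v V S' \<longrightarrow> cost w f q S \<le> cost w f q S')"

definition num_batches :: "(nat \<Rightarrow> nat) \<Rightarrow> (nat set \<times> real) list \<Rightarrow> nat \<Rightarrow> nat" where
  "num_batches f S j = card {k. k < length S \<and> (\<exists>i\<in>fst (S!k). f i = j)}"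

fun greedy_count :: "real \<Rightarrow> real list \<Rightarrow> nat" where
  "greedy_count cap [] = 0"
| "greedy_count cap (x # xs) = (if x \<le> cap then Suc (greedy_count (cap - x) xs) else 0)"

definition Nb :: "nat \<Rightarrow> (nat \<Rightarrow> nat) \<Rightarrow> (nat \<Rightarrow> real) \<Rightarrow> real \<Rightarrow> nat \<Rightarrow> nat" where
  "Nb n f v V j = greedy_count V (rev (sort (map v (sorted_list_of_set (fam_jobs n f j)))))"

definition Bj :: "nat \<Rightarrow> (nat \<Rightarrow> nat) \<Rightarrow> (nat \<Rightarrow> real) \<Rightarrow> real \<Rightarrow> nat \<Rightarrow> int" where
  "Bj n f v V j = \<lceil>real (card (fam_jobs n f j)) / real (Nb n f v V j)\<rceil>"

end

theory Submission
  imports Defs "HOL-Library.Multiset"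
begin

lemma topk:
  fixes xs :: "real list"
  shows "sorted_wrt (\<ge>) xs \<Longrightarrow> \<forall>x\<in>set xs. 0 \<le> x \<Longrightarrow> M \<subseteq># mset xs \<Longrightarrow> size M \<le> k
    \<Longrightarrow> sum_mset M \<le> sum_list (take k xs)"
proof (induction xs arbitrary: M k)
  case Nil
  then have "M = {#}" by simp
  then show ?case by simp
next
  case (Cons x ys)
  have s1: "sorted_wrt (\<ge>) ys" and xge: "\<forall>z\<in>set ys. z \<le> x" using Cons.prems(1) by auto
  have n1: "\<forall>x\<in>set ys. 0 \<le> x" and x0: "0 \<le> x" using Cons.prems(2) by auto
  have Msub: "M \<subseteq># add_mset x (mset ys)" using Cons.prems(3) by simp
  show ?case
  proof (cases k)
    case 0
    then have "M = {#}" using Cons.prems(4) by simp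
    then show ?thesis using 0 by simp
  next
    case (Suc k')
    have tk: "sum_list (take k (x # ys)) = x + sum_list (take k' ys)" using Suc by simp
    have "\<And>z. z \<in> set (take k' ys) \<Longrightarrow> 0 \<le> z" using n1 by (meson in_set_takeD)
    then have nn: "0 \<le> sum_list (take k' ys)" by (rule sum_list_nonneg)
    show ?thesis
    proof (cases "x \<in># M")
      case True
      have "M - {#x#} \<subseteq># mset ys" using Msub True
        using subset_eq_diff_conv by force
      moreover have "size (M - {#x#}) \<le> k'"
        using Cons.prems(4) size_Diff_singleton[OF True] Suc by linarith
      ultimately have "sum_mset (M - {#x#}) \<le> sum_list (take k' ys)"
        by (rule Cons.IH[OF s1 n1])
      moreover have "sum_mset M = x + sum_mset (M - {#x#})" using True
        by (rule sum_mset.remove)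
      ultimately show ?thesis using tk by linarith
    next
      case False
      have sub: "M \<subseteq># mset ys" using Msub False
        by (simp add: inter_add_left1 subset_mset.inf.absorb_iff2)
      show ?thesis
      proof (cases "M = {#}")
        case True
        then show ?thesis using tk nn x0 by simp
      next
        case False
        then obtain y where y: "y \<in># M" by (meson multiset_nonemptyE)
        have "y \<in># mset ys" using mset_subset_eqD[OF sub y] .
        then have yx: "y \<le> x" using xge by simp
        have "M - {#y#} \<subseteq># mset ys" using sub diff_subset_eq_self subset_mset.trans by blast
        moreover have "size (M - {#y#}) \<le> k'"
          using Cons.prems(4) size_Diff_singleton[OF y] Suc by linarith
        ultimately have "sum_mset (M - {#y#}) \<le> sum_list (take k' ys)"
          by (rule Cons.IH[OF s1 n1])
        moreover have "sum_mset M = y + sum_mset (M - {#y#})" using y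
          by (rule sum_mset.remove)
        ultimately show ?thesis using tk yx by linarith
      qed
    qed
  qed
qed

lemma greedy_sum: "0 \<le> c \<Longrightarrow> sum_list (take (greedy_count c xs) xs) \<le> c"
proof (induction c xs rule: greedy_count.induct)
  case (1 cap)
  then show ?case by simp
next
  case (2 cap x xs)
  show ?case
  proof (cases "x \<le> cap")
    case True
    then have "sum_list (take (greedy_count (cap - x) xs) xs) \<le> cap - x" using 2 by simp
    then show ?thesis using True by simp
  next
    case False
    then show ?thesis using 2 by simp
  qed
qed

lemma Nb_fit:
  assumes vb: "\<forall>i\<in>{1..n}. 0 \<le> v i \<and> v i \<le> V"
    and A: "A \<subseteq> fam_jobs n f j" "A \<noteq> {}" "card A \<le> Nb n f v V j"
  shows "(\<Sum>i\<in>A. v i) \<le> V"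
proof -
  let ?F = "fam_jobs n f j"
  let ?xs = "rev (sort (map v (sorted_list_of_set ?F)))"
  have finF: "finite ?F" by (simp add: fam_jobs_def)
  have F1: "?F \<subseteq> {1..n}" by (auto simp: fam_jobs_def)
  obtain a where a: "a \<in> A" using A(2) by blast
  have "a \<in> {1..n}" using a A(1) F1 by blast
  then have V0: "0 \<le> V" using vb by force
  have h: "mset (sorted_list_of_set ?F) = mset_set ?F"
    using mset_sorted_list_of_multiset[of "mset_set ?F"] by (simp only: sorted_list_of_mset_set)
  have ms: "mset ?xs = image_mset v (mset_set ?F)" by (simp only: mset_rev mset_sort mset_map h)
  have srt: "sorted_wrt (\<ge>) ?xs" by (simp add: sorted_wrt_rev)
  have nn: "\<forall>x\<in>set ?xs. 0 \<le> x"
  proof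
    fix x assume "x \<in> set ?xs"
    then have "x \<in> v ` ?F" using finF by simp
    then show "0 \<le> x" using vb F1 by force
  qed
  have finA: "finite A" using A(1) finF finite_subset by blast
  have "image_mset v (mset_set A) \<subseteq># mset ?xs" unfolding ms
    by (intro image_mset_subseteq_mono) (simp add: A(1) finA finF)
  moreover have "size (image_mset v (mset_set A)) \<le> Nb n f v V j" using A(3) by simp
  ultimately have "sum_mset (image_mset v (mset_set A)) \<le> sum_list (take (Nb n f v V j) ?xs)"
    by (rule topk[OF srt nn])
  also have "\<dots> \<le> V" unfolding Nb_def by (rule greedy_sum[OF V0])
  finally have "sum_mset (image_mset v (mset_set A)) \<le> V" .
  moreover have "sum v A = sum_mset (image_mset v (mset_set A))" by (rule sum_unfold_sum_mset)
  ultimately show ?thesis by linarith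
qed

lemma Nb_pos:
  assumes vb: "\<forall>i\<in>{1..n}. 0 \<le> v i \<and> v i \<le> V"
    and F: "fam_jobs n f j \<noteq> {}"
  shows "Nb n f v V j \<ge> 1"
proof -
  let ?F = "fam_jobs n f j"
  let ?xs = "rev (sort (map v (sorted_list_of_set ?F)))"
  have finF: "finite ?F" by (simp add: fam_jobs_def)
  have F1: "?F \<subseteq> {1..n}" by (auto simp: fam_jobs_def)
  have "?xs \<noteq> []" using F finF proof -
    have "length ?xs = card ?F" by simp
    moreover have "card ?F \<noteq> 0" using F finF by simp
    ultimately show ?thesis by (metis list.size(3))
  qed
  then obtain x ys where xs: "?xs = x # ys" by (cases ?xs) auto
  have "x \<in> set ?xs" using xs by simp
  then have "x \<le> V" using vb F1 finF by auto
  then show ?thesis unfolding Nb_def xs by simp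
qed

definition bcost :: "(nat \<Rightarrow> real) \<Rightarrow> (nat \<Rightarrow> nat) \<Rightarrow> (nat \<Rightarrow> real) \<Rightarrow> nat set \<times> real \<Rightarrow> real" where
  "bcost w f q y = (\<Sum>i\<in>fst y. w i * (snd y + q (f i)))"

definition qb :: "(nat \<Rightarrow> nat) \<Rightarrow> (nat \<Rightarrow> real) \<Rightarrow> nat set \<Rightarrow> real" where
  "qb f q B = q (f (Min B))"

definition comp :: "(nat \<Rightarrow> nat) \<Rightarrow> (nat \<Rightarrow> real) \<Rightarrow> nat set list \<Rightarrow> (nat set \<times> real) list" where
  "comp f q L = map (\<lambda>k. (L!k, \<Sum>l<k. qb f q (L!l))) [0..<length L]"

definition feas_set where
  "feas_set n f q v V S \<longleftrightarrow> distinct S \<and>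
     (\<forall>y\<in>set S. fst y \<noteq> {} \<and> fst y \<subseteq> {1..n} \<and> (\<forall>i\<in>fst y. \<forall>i'\<in>fst y. f i = f i')
        \<and> (\<Sum>i\<in>fst y. v i) \<le> V \<and> 0 \<le> snd y)
   \<and> \<Union>(fst ` set S) = {1..n}
   \<and> (\<forall>y\<in>set S. \<forall>z\<in>set S. y \<noteq> z \<longrightarrow> fst y \<inter> fst z = {}
        \<and> (\<forall>i\<in>fst y. \<forall>i'\<in>fst z. snd y + q (f i) \<le> snd z \<or> snd z + q (f i') \<le> snd y))"

lemma cost_list: "cost w f q S = sum_list (map (bcost w f q) S)"
  unfolding cost_def bcost_def by (simp add: sum_list_sum_nth atLeast0LessThan)

lemma cost_set: "distinct S \<Longrightarrow> cost w f q S = (\<Sum>y\<in>set S. bcost w f q y)"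
  by (simp add: cost_list sum_list_distinct_conv_sum_set)

lemma UN_nth: "(\<Union>k<length S. fst (S!k)) = \<Union>(fst ` set S)"
proof -
  have "set S = (!) S ` {..<length S}" by (metis atLeast0LessThan list.set_map map_nth set_upt)
  then show ?thesis by (simp add: image_comp)
qed

lemma feasible_iff: "feasible n f q v V S \<longleftrightarrow> feas_set n f q v V S"
proof
  assume F: "feasible n f q v V S"
  have F1: "\<forall>k<length S. fst (S!k) \<noteq> {} \<and> fst (S!k) \<subseteq> {1..n}
        \<and> (\<forall>i\<in>fst (S!k). \<forall>i'\<in>fst (S!k). f i = f i')
        \<and> (\<Sum>i\<in>fst (S!k). v i) \<le> V \<and> 0 \<le> snd (S!k)"
    using F unfolding feasible_def by (rule conjunct1)
  have F2: "(\<Union>k<length S. fst (S!k)) = {1..n}"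
    using F unfolding feasible_def by (rule conjunct1[OF conjunct2])
  have F3: "\<forall>k<length S. \<forall>l<length S. k \<noteq> l \<longrightarrow>
        fst (S!k) \<inter> fst (S!l) = {}
        \<and> (\<forall>i\<in>fst (S!k). \<forall>i'\<in>fst (S!l).
              snd (S!k) + q (f i) \<le> snd (S!l) \<or> snd (S!l) + q (f i') \<le> snd (S!k))"
    using F unfolding feasible_def by (rule conjunct2[OF conjunct2])
  have D: "distinct S"
    unfolding distinct_conv_nth
  proof (intro allI impI)
    fix k l assume kl: "k < length S" "l < length S" "k \<noteq> l"
    show "S!k \<noteq> S!l"
    proof
      assume e: "S!k = S!l"
      have "fst (S!k) \<inter> fst (S!l) = {}" using F3 kl by blast
      then have "fst (S!k) = {}" using e by simp
      moreover have "fst (S!k) \<noteq> {}" using F1 kl(1) by blast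
      ultimately show False by contradiction
    qed
  qed
  show "feas_set n f q v V S" unfolding feas_set_def
  proof (intro conjI)
    show "distinct S" by (rule D)
    show "\<forall>y\<in>set S. fst y \<noteq> {} \<and> fst y \<subseteq> {1..n} \<and> (\<forall>i\<in>fst y. \<forall>i'\<in>fst y. f i = f i')
        \<and> (\<Sum>i\<in>fst y. v i) \<le> V \<and> 0 \<le> snd y"
    proof
      fix y assume "y \<in> set S"
      then obtain k where "k < length S" "y = S!k" by (metis in_set_conv_nth)
      then show "fst y \<noteq> {} \<and> fst y \<subseteq> {1..n} \<and> (\<forall>i\<in>fst y. \<forall>i'\<in>fst y. f i = f i')
        \<and> (\<Sum>i\<in>fst y. v i) \<le> V \<and> 0 \<le> snd y" using F1 by blast
    qed
    show "\<Union>(fst ` set S) = {1..n}" using F2 unfolding UN_nth .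
    show "\<forall>y\<in>set S. \<forall>z\<in>set S. y \<noteq> z \<longrightarrow> fst y \<inter> fst z = {}
        \<and> (\<forall>i\<in>fst y. \<forall>i'\<in>fst z. snd y + q (f i) \<le> snd z \<or> snd z + q (f i') \<le> snd y)"
    proof (intro ballI impI)
      fix y z assume yz: "y \<in> set S" "z \<in> set S" "y \<noteq> z"
      obtain k where k: "k < length S" "y = S!k" using yz(1) by (metis in_set_conv_nth)
      obtain l where l: "l < length S" "z = S!l" using yz(2) by (metis in_set_conv_nth)
      have "k \<noteq> l" using yz k l by blast
      then show "fst y \<inter> fst z = {}
        \<and> (\<forall>i\<in>fst y. \<forall>i'\<in>fst z. snd y + q (f i) \<le> snd z \<or> snd z + q (f i') \<le> snd y)"
        using F3 k l by blast
    qed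
  qed
next
  assume F: "feas_set n f q v V S"
  have D: "distinct S"
    using F unfolding feas_set_def by (rule conjunct1)
  have F1: "\<forall>y\<in>set S. fst y \<noteq> {} \<and> fst y \<subseteq> {1..n} \<and> (\<forall>i\<in>fst y. \<forall>i'\<in>fst y. f i = f i')
        \<and> (\<Sum>i\<in>fst y. v i) \<le> V \<and> 0 \<le> snd y"
    using F unfolding feas_set_def by (rule conjunct1[OF conjunct2])
  have F2: "\<Union>(fst ` set S) = {1..n}"
    using F unfolding feas_set_def by (rule conjunct1[OF conjunct2[OF conjunct2]])
  have F3: "\<forall>y\<in>set S. \<forall>z\<in>set S. y \<noteq> z \<longrightarrow> fst y \<inter> fst z = {}
        \<and> (\<forall>i\<in>fst y. \<forall>i'\<in>fst z. snd y + q (f i) \<le> snd z \<or> snd z + q (f i') \<le> snd y)"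
    using F unfolding feas_set_def by (rule conjunct2[OF conjunct2[OF conjunct2]])
  show "feasible n f q v V S" unfolding feasible_def
  proof (intro conjI)
    show "\<forall>k<length S. fst (S!k) \<noteq> {} \<and> fst (S!k) \<subseteq> {1..n}
        \<and> (\<forall>i\<in>fst (S!k). \<forall>i'\<in>fst (S!k). f i = f i')
        \<and> (\<Sum>i\<in>fst (S!k). v i) \<le> V \<and> 0 \<le> snd (S!k)"
    proof (intro allI impI)
      fix k assume "k < length S"
      then have "S!k \<in> set S" by (rule nth_mem)
      then show "fst (S!k) \<noteq> {} \<and> fst (S!k) \<subseteq> {1..n}
        \<and> (\<forall>i\<in>fst (S!k). \<forall>i'\<in>fst (S!k). f i = f i')
        \<and> (\<Sum>i\<in>fst (S!k). v i) \<le> V \<and> 0 \<le> snd (S!k)" using F1 by blast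
    qed
    show "(\<Union>k<length S. fst (S!k)) = {1..n}" using F2 unfolding UN_nth .
    show "\<forall>k<length S. \<forall>l<length S. k \<noteq> l \<longrightarrow>
        fst (S!k) \<inter> fst (S!l) = {}
        \<and> (\<forall>i\<in>fst (S!k). \<forall>i'\<in>fst (S!l).
              snd (S!k) + q (f i) \<le> snd (S!l) \<or> snd (S!l) + q (f i') \<le> snd (S!k))"
    proof (intro allI impI)
      fix k l assume kl: "k < length S" "l < length S" "k \<noteq> l"
      then have ne: "S!k \<noteq> S!l" using D by (simp add: nth_eq_iff_index_eq)
      have "S!k \<in> set S" "S!l \<in> set S" using kl by simp_all
      then show "fst (S!k) \<inter> fst (S!l) = {}
        \<and> (\<forall>i\<in>fst (S!k). \<forall>i'\<in>fst (S!l).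
              snd (S!k) + q (f i) \<le> snd (S!l) \<or> snd (S!l) + q (f i') \<le> snd (S!k))"
        using F3 ne by blast
    qed
  qed
qed

lemma num_batches_set: "distinct S \<Longrightarrow> num_batches f S j = card {y\<in>set S. \<exists>i\<in>fst y. f i = j}"
proof -
  assume D: "distinct S"
  have "num_batches f S j = length (filter (\<lambda>y. \<exists>i\<in>fst y. f i = j) S)"
    unfolding num_batches_def by (simp add: length_filter_conv_card)
  also have "\<dots> = card (set (filter (\<lambda>y. \<exists>i\<in>fst y. f i = j) S))"
    using distinct_card[OF distinct_filter[OF D]] by simp
  also have "\<dots> = card {y\<in>set S. \<exists>i\<in>fst y. f i = j}" by (simp only: set_filter)
  finally show ?thesis .
qed

locale sched =
  fixes n m :: nat and f :: "nat \<Rightarrow> nat" and q :: "nat \<Rightarrow> real" and v :: "nat \<Rightarrow> real" and V :: real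
  assumes fam: "\<forall>i\<in>{1..n}. f i \<in> {1..m}"
    and q_pos: "\<forall>j\<in>{1..m}. q j > 0"
    and v_bounds: "\<forall>i\<in>{1..n}. 0 \<le> v i \<and> v i \<le> V"
begin

lemma qpos: "i \<in> {1..n} \<Longrightarrow> q (f i) > 0" using fam q_pos by blast

lemma fs_all:
  assumes "feas_set n f q v V S"
  shows "\<forall>y\<in>set S. fst y \<noteq> {} \<and> fst y \<subseteq> {1..n} \<and> (\<forall>i\<in>fst y. \<forall>i'\<in>fst y. f i = f i')
        \<and> (\<Sum>i\<in>fst y. v i) \<le> V \<and> 0 \<le> snd y"
  using assms unfolding feas_set_def by (rule conjunct1[OF conjunct2])

lemma fs_allpair:
  assumes "feas_set n f q v V S"
  shows "\<forall>y\<in>set S. \<forall>z\<in>set S. y \<noteq> z \<longrightarrow> fst y \<inter> fst z = {}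
        \<and> (\<forall>i\<in>fst y. \<forall>i'\<in>fst z. snd y + q (f i) \<le> snd z \<or> snd z + q (f i') \<le> snd y)"
  using assms unfolding feas_set_def by (rule conjunct2[OF conjunct2[OF conjunct2]])

lemma fs_elem:
  assumes "feas_set n f q v V S" "y \<in> set S"
  shows "fst y \<noteq> {}" "fst y \<subseteq> {1..n}" "\<forall>i\<in>fst y. \<forall>i'\<in>fst y. f i = f i'"
    "(\<Sum>i\<in>fst y. v i) \<le> V" "0 \<le> snd y"
  using bspec[OF fs_all[OF assms(1)] assms(2)] by blast+

lemma fs_pair:
  assumes "feas_set n f q v V S" "y \<in> set S" "z \<in> set S" "y \<noteq> z"
  shows "fst y \<inter> fst z = {}"
    "\<forall>i\<in>fst y. \<forall>i'\<in>fst z. snd y + q (f i) \<le> snd z \<or> snd z + q (f i') \<le> snd y"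
  using mp[OF bspec[OF bspec[OF fs_allpair[OF assms(1)] assms(2)] assms(3)] assms(4)] by blast+

lemma fs_distinct: "feas_set n f q v V S \<Longrightarrow> distinct S"
  unfolding feas_set_def by (rule conjunct1)

lemma fs_cover: "feas_set n f q v V S \<Longrightarrow> \<Union>(fst ` set S) = {1..n}"
  unfolding feas_set_def by (rule conjunct1[OF conjunct2[OF conjunct2]])

lemma starts_distinct:
  assumes FS: "feas_set n f q v V S" and yz: "y \<in> set S" "z \<in> set S" "snd y = snd z"
  shows "y = z"
proof (rule ccontr)
  assume ne: "y \<noteq> z"
  obtain i where i: "i \<in> fst y" using fs_elem(1)[OF FS yz(1)] by blast
  obtain i' where i': "i' \<in> fst z" using fs_elem(1)[OF FS yz(2)] by blast
  have "snd y + q (f i) \<le> snd z \<or> snd z + q (f i') \<le> snd y"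
    using fs_pair(2)[OF FS yz(1,2) ne] i i' by blast
  moreover have "q (f i) > 0" using qpos fs_elem(2)[OF FS yz(1)] i by blast
  moreover have "q (f i') > 0" using qpos fs_elem(2)[OF FS yz(2)] i' by blast
  ultimately show False using yz(3) by linarith
qed

lemma Min_mem: assumes FS: "feas_set n f q v V S" "y \<in> set S" shows "Min (fst y) \<in> fst y"
proof -
  have "finite (fst y)" using fs_elem(2)[OF FS] finite_subset by blast
  then show ?thesis using Min_in fs_elem(1)[OF FS] by blast
qed

lemma length_le: assumes FS: "feas_set n f q v V S" shows "length S \<le> n"
proof -
  have "length S = card (set S)" using fs_distinct[OF FS] by (simp add: distinct_card)
  also have "\<dots> \<le> card {1..n}"
  proof (rule card_inj_on_le[where f = "\<lambda>y. Min (fst y)"])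
    show "inj_on (\<lambda>y. Min (fst y)) (set S)"
    proof (rule inj_onI)
      fix y z assume yz: "y \<in> set S" "z \<in> set S" "Min (fst y) = Min (fst z)"
      show "y = z"
      proof (rule ccontr)
        assume "y \<noteq> z"
        then have "fst y \<inter> fst z = {}" using fs_pair(1)[OF FS yz(1,2)] by blast
        moreover have "Min (fst y) \<in> fst y" "Min (fst z) \<in> fst z" using Min_mem[OF FS] yz by blast+
        ultimately show False using yz(3) by auto
      qed
    qed
    show "(\<lambda>y. Min (fst y)) ` set S \<subseteq> {1..n}" using Min_mem[OF FS] fs_elem(2)[OF FS] by blast
  qed simp
  finally show ?thesis by simp
qed

lemma compress:
  assumes F: "feasible n f q v V S"
  shows "\<exists>S'. feasible n f q v V S' \<and> S' \<in> comp f q ` {L. set L \<subseteq> Pow {1..n} \<and> length L \<le> n}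
     \<and> (\<forall>w. (\<forall>i\<in>{1..n}. 0 \<le> w i) \<longrightarrow> cost w f q S' \<le> cost w f q S)"
proof -
  define S1 where "S1 = sort_key snd S"
  have FS: "feas_set n f q v V S" using F feasible_iff by blast
  have FS1: "feas_set n f q v V S1" using FS unfolding S1_def feas_set_def set_sort distinct_sort .
  have F1: "feasible n f q v V S1" using FS1 feasible_iff by blast
  define L where "L = map fst S1"
  define len where "len = length S1"
  define P where "P k = (\<Sum>l<k. qb f q (L!l))" for k
  have Lk: "k < len \<Longrightarrow> L!k = fst (S1!k)" for k unfolding L_def len_def by simp
  have lenL: "length L = len" unfolding L_def len_def by simp
  have el: "k < len \<Longrightarrow> S1!k \<in> set S1" for k unfolding len_def by simp
  have qbk: "q (f i) = qb f q (L!k)" if "k < len" "i \<in> L!k" for k i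
  proof -
    have "Min (L!k) \<in> L!k" using Min_mem[OF FS1 el[OF that(1)]] Lk[OF that(1)] by simp
    then have "f i = f (Min (L!k))" using fs_elem(3)[OF FS1 el[OF that(1)]] Lk[OF that(1)] that(2) by blast
    then show ?thesis unfolding qb_def by simp
  qed
  have qbpos: "qb f q (L!k) > 0" if "k < len" for k
  proof -
    have "Min (L!k) \<in> L!k" using Min_mem[OF FS1 el[OF that]] Lk[OF that] by simp
    then have "Min (L!k) \<in> {1..n}" using fs_elem(2)[OF FS1 el[OF that]] Lk[OF that] by blast
    then show ?thesis unfolding qb_def using qpos by blast
  qed
  have srt: "snd (S1!k) \<le> snd (S1!l)" if "k \<le> l" "l < len" for k l
  proof -
    have "sorted (map snd S1)" unfolding S1_def by simp
    then have "map snd S1 ! k \<le> map snd S1 ! l" using that unfolding len_def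
      by (intro sorted_nth_mono) auto
    then show ?thesis using that unfolding len_def by simp
  qed
  have step: "snd (S1!k) + qb f q (L!k) \<le> snd (S1!Suc k)" if "Suc k < len" for k
  proof -
    have k: "k < len" using that by simp
    have ne: "S1!k \<noteq> S1!Suc k" using fs_distinct[OF FS1] that unfolding len_def
      by (simp add: nth_eq_iff_index_eq)
    let ?i = "Min (L!k)" and ?i' = "Min (L!Suc k)"
    have i: "?i \<in> fst (S1!k)" using Min_mem[OF FS1 el[OF k]] Lk[OF k] by simp
    have i': "?i' \<in> fst (S1!Suc k)" using Min_mem[OF FS1 el[OF that]] Lk[OF that] by simp
    have "snd (S1!k) + q (f ?i) \<le> snd (S1!Suc k) \<or> snd (S1!Suc k) + q (f ?i') \<le> snd (S1!k)"
      using fs_pair(2)[OF FS1 el[OF k] el[OF that] ne] i i' by blast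
    moreover have "q (f ?i) = qb f q (L!k)" using qbk[OF k] i Lk[OF k] by simp
    moreover have "q (f ?i') > 0" using qbk[OF that] i' Lk[OF that] qbpos[OF that] by simp
    moreover have "snd (S1!k) \<le> snd (S1!Suc k)" using srt that by simp
    ultimately show ?thesis by linarith
  qed
  have Ple: "k < len \<Longrightarrow> P k \<le> snd (S1!k)" for k
  proof (induction k)
    case 0
    then show ?case unfolding P_def using fs_elem(5)[OF FS1 el[OF 0]] by simp
  next
    case (Suc k)
    have "P (Suc k) = P k + qb f q (L!k)" unfolding P_def by simp
    also have "\<dots> \<le> snd (S1!k) + qb f q (L!k)" using Suc by simp
    also have "\<dots> \<le> snd (S1!Suc k)" using step Suc.prems by blast
    finally show ?case .
  qed
  have Pmono: "P k \<le> P l" if "k \<le> l" "l \<le> len" for k l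
    unfolding P_def
  proof (rule sum_mono2)
    show "finite {..<l}" by simp
    show "{..<k} \<subseteq> {..<l}" using that by auto
    fix b assume "b \<in> {..<l} - {..<k}"
    then have "b < len" using that by auto
    then show "0 \<le> qb f q (L ! b)" using qbpos[of b] by linarith
  qed
  have PSuc: "P (Suc k) = P k + qb f q (L!k)" for k unfolding P_def by simp
  define S2 where "S2 = comp f q L"
  have len2: "length S2 = len" unfolding S2_def comp_def lenL by simp
  have S2k: "k < len \<Longrightarrow> S2!k = (L!k, P k)" for k
    unfolding S2_def comp_def P_def lenL by simp
  have F2: "feasible n f q v V S2"
    unfolding feasible_def len2
  proof (intro conjI)
    show "\<forall>k<len. fst (S2!k) \<noteq> {} \<and> fst (S2!k) \<subseteq> {1..n}
        \<and> (\<forall>i\<in>fst (S2!k). \<forall>i'\<in>fst (S2!k). f i = f i')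
        \<and> (\<Sum>i\<in>fst (S2!k). v i) \<le> V \<and> 0 \<le> snd (S2!k)"
    proof (intro allI impI)
      fix k assume k: "k < len"
      have e: "fst (S2!k) = fst (S1!k)" "snd (S2!k) = P k" using S2k[OF k] Lk[OF k] by simp_all
      have "0 \<le> P k" using Pmono[of 0 k] k unfolding P_def by simp
      then show "fst (S2!k) \<noteq> {} \<and> fst (S2!k) \<subseteq> {1..n}
        \<and> (\<forall>i\<in>fst (S2!k). \<forall>i'\<in>fst (S2!k). f i = f i')
        \<and> (\<Sum>i\<in>fst (S2!k). v i) \<le> V \<and> 0 \<le> snd (S2!k)"
        unfolding e using fs_elem[OF FS1 el[OF k]] by blast
    qed
    have "(\<Union>k<len. fst (S2!k)) = (\<Union>k<len. fst (S1!k))"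
      by (intro arg_cong[where f=Union] image_cong) (simp_all add: S2k Lk)
    also have "\<dots> = {1..n}" using fs_cover[OF FS1] unfolding len_def UN_nth .
    finally show "(\<Union>k<len. fst (S2!k)) = {1..n}" .
    show "\<forall>k<len. \<forall>l<len. k \<noteq> l \<longrightarrow>
        fst (S2!k) \<inter> fst (S2!l) = {}
        \<and> (\<forall>i\<in>fst (S2!k). \<forall>i'\<in>fst (S2!l).
              snd (S2!k) + q (f i) \<le> snd (S2!l) \<or> snd (S2!l) + q (f i') \<le> snd (S2!k))"
    proof (intro allI impI conjI ballI)
      fix k l assume kl: "k < len" "l < len" "k \<noteq> l"
      have ne: "S1!k \<noteq> S1!l" using fs_distinct[OF FS1] kl unfolding len_def
        by (simp add: nth_eq_iff_index_eq)
      show "fst (S2!k) \<inter> fst (S2!l) = {}"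
        using fs_pair(1)[OF FS1 el[OF kl(1)] el[OF kl(2)] ne] S2k Lk kl by simp
      fix i i' assume ii: "i \<in> fst (S2!k)" "i' \<in> fst (S2!l)"
      have qi: "q (f i) = qb f q (L!k)" using qbk[OF kl(1)] ii(1) S2k[OF kl(1)] by simp
      have qi': "q (f i') = qb f q (L!l)" using qbk[OF kl(2)] ii(2) S2k[OF kl(2)] by simp
      show "snd (S2!k) + q (f i) \<le> snd (S2!l) \<or> snd (S2!l) + q (f i') \<le> snd (S2!k)"
      proof (cases "k < l")
        case True
        have "P k + qb f q (L!k) \<le> P l" using Pmono[of "Suc k" l] True kl PSuc[of k] by simp
        then show ?thesis using S2k kl qi by simp
      next
        case False
        then have "l < k" using kl by simp
        then have "P l + qb f q (L!l) \<le> P k" using Pmono[of "Suc l" k] kl PSuc[of l] by simp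
        then show ?thesis using S2k kl qi' by simp
      qed
    qed
  qed
  have C: "cost w f q S2 \<le> cost w f q S" if w: "\<forall>i\<in>{1..n}. 0 \<le> w i" for w
  proof -
    have "cost w f q S2 = (\<Sum>k<len. \<Sum>i\<in>fst (S1!k). w i * (P k + q (f i)))"
      unfolding cost_def len2 using S2k Lk by (intro sum.cong) simp_all
    also have "\<dots> \<le> (\<Sum>k<len. \<Sum>i\<in>fst (S1!k). w i * (snd (S1!k) + q (f i)))"
    proof (intro sum_mono)
      fix k i assume k: "k \<in> {..<len}" and i: "i \<in> fst (S1!k)"
      have "0 \<le> w i" using w i fs_elem(2)[OF FS1 el] k by blast
      moreover have "P k \<le> snd (S1!k)" using Ple k by simp
      ultimately show "w i * (P k + q (f i)) \<le> w i * (snd (S1!k) + q (f i))"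
        by (simp add: mult_left_mono)
    qed
    also have "\<dots> = cost w f q S1" unfolding cost_def len_def ..
    also have "\<dots> = cost w f q S"
      using cost_set fs_distinct[OF FS1] fs_distinct[OF FS] unfolding S1_def by simp
    finally show ?thesis .
  qed
  have M: "S2 \<in> comp f q ` {L. set L \<subseteq> Pow {1..n} \<and> length L \<le> n}"
  proof -
    have "set L \<subseteq> Pow {1..n}" unfolding L_def using fs_elem(2)[OF FS1] by auto
    moreover have "length L \<le> n" using length_le[OF FS1] lenL unfolding len_def by simp
    ultimately show ?thesis unfolding S2_def by blast
  qed
  show ?thesis using F2 M C by blast
qed

end

context sched
begin

lemma improve:
  assumes F: "feasible n f q v V S" and viol: "int (num_batches f S j) > Bj n f v V j"
  shows "\<exists>T. feasible n f q v V T \<and> (\<forall>w. (\<forall>i\<in>{1..n}. 0 \<le> w i) \<longrightarrow> cost w f q T \<le> cost w f q S)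
     \<and> cost (\<lambda>_. 1) f q T < cost (\<lambda>_. 1) f q S"
proof -
  have FS: "feas_set n f q v V S" using F feasible_iff by blast
  have DS: "distinct S" using fs_distinct[OF FS] .
  define X where "X = {y\<in>set S. \<exists>i\<in>fst y. f i = j}"
  define Fj where "Fj = fam_jobs n f j"
  define Nbj where "Nbj = Nb n f v V j"
  have finX: "finite X" unfolding X_def by simp
  have XS: "X \<subseteq> set S" unfolding X_def by blast
  have cardX: "num_batches f S j = card X" unfolding X_def using num_batches_set[OF DS] .
  have finy: "y \<in> set S \<Longrightarrow> finite (fst y)" for y using fs_elem(2)[OF FS] finite_subset by blast
  have famX: "y \<in> X \<Longrightarrow> i \<in> fst y \<Longrightarrow> f i = j" for y i
  proof -
    assume y: "y \<in> X" and i: "i \<in> fst y"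
    then obtain i0 where "i0 \<in> fst y" "f i0 = j" unfolding X_def by blast
    moreover have "y \<in> set S" using y XS by blast
    ultimately show "f i = j" using fs_elem(3)[OF FS] i by metis
  qed
  have FjU: "Fj = \<Union>(fst ` X)"
  proof
    show "Fj \<subseteq> \<Union>(fst ` X)"
    proof
      fix i assume "i \<in> Fj"
      then have i: "i \<in> {1..n}" "f i = j" unfolding Fj_def fam_jobs_def by auto
      then obtain y where "y \<in> set S" "i \<in> fst y" using fs_cover[OF FS] by blast
      then show "i \<in> \<Union>(fst ` X)" using i unfolding X_def by blast
    qed
    show "\<Union>(fst ` X) \<subseteq> Fj"
    proof
      fix i assume "i \<in> \<Union>(fst ` X)"
      then obtain y where y: "y \<in> X" "i \<in> fst y" by blast
      then have "i \<in> {1..n}" using fs_elem(2)[OF FS] XS by blast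
      then show "i \<in> Fj" using famX[OF y] unfolding Fj_def fam_jobs_def by simp
    qed
  qed
  have cardFj: "card Fj = (\<Sum>y\<in>X. card (fst y))"
    unfolding FjU
  proof (rule card_UN_disjoint)
    show "finite X" by (rule finX)
    show "\<forall>y\<in>X. finite (fst y)" using finy XS by blast
    show "\<forall>y\<in>X. \<forall>z\<in>X. y \<noteq> z \<longrightarrow> fst y \<inter> fst z = {}" using fs_pair(1)[OF FS] XS by blast
  qed
  have nn0: "0 \<le> real (card (fam_jobs n f j)) / real (Nb n f v V j)" by simp
  have Bj0: "0 \<le> Bj n f v V j" unfolding Bj_def using ceiling_mono[OF nn0] by simp
  then have "card X \<ge> 1" using viol cardX by linarith
  then have Xne: "X \<noteq> {}" using finX by auto
  then obtain y0 where y0: "y0 \<in> X" by blast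
  then obtain i0 where "i0 \<in> fst y0" "f i0 = j" unfolding X_def by blast
  moreover have "i0 \<in> {1..n}" using calculation fs_elem(2)[OF FS] y0 XS by blast
  ultimately have "Fj \<noteq> {}" unfolding Fj_def fam_jobs_def by blast
  then have Nb1: "Nbj \<ge> 1" unfolding Fj_def Nbj_def using Nb_pos v_bounds by blast
  obtain b where b: "b \<in> X" "\<forall>y\<in>X. snd y \<le> snd b"
  proof -
    have "Max (snd ` X) \<in> snd ` X" using finX Xne by simp
    then obtain b where "b \<in> X" "snd b = Max (snd ` X)" by auto
    moreover have "\<forall>y\<in>X. snd y \<le> Max (snd ` X)" using finX by simp
    ultimately show ?thesis using that by simp
  qed
  have "\<exists>a\<in>X - {b}. card (fst a) < Nbj"
  proof (rule ccontr)
    assume "\<not> ?thesis"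
    then have ge: "\<forall>y\<in>X - {b}. Nbj \<le> card (fst y)" by (simp add: not_less)
    have "card Fj = card (fst b) + (\<Sum>y\<in>X - {b}. card (fst y))"
      unfolding cardFj using sum.remove[OF finX b(1)] .
    moreover have "card (X - {b}) * Nbj \<le> (\<Sum>y\<in>X - {b}. card (fst y))"
      using sum_bounded_below[of "X - {b}" Nbj "\<lambda>y. card (fst y)"] ge by simp
    moreover have "card (fst b) \<ge> 1"
      using fs_elem(1)[OF FS] finy XS b(1) by (meson card_0_eq less_one not_less subsetD)
    moreover have "card (X - {b}) = card X - 1" using b(1) finX by simp
    ultimately have A: "card Fj \<ge> 1 + (card X - 1) * Nbj" by simp
    have "int (card X) \<ge> \<lceil>real (card Fj) / real Nbj\<rceil> + 1"
      using viol cardX unfolding Bj_def Fj_def Nbj_def by simp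
    then have "real_of_int (int (card X)) \<ge> real_of_int (\<lceil>real (card Fj) / real Nbj\<rceil> + 1)"
      by (simp only: of_int_le_iff)
    then have "real (card X) \<ge> real_of_int \<lceil>real (card Fj) / real Nbj\<rceil> + 1" by simp
    then have "real (card X) \<ge> real (card Fj) / real Nbj + 1"
      using le_of_int_ceiling[of "real (card Fj) / real Nbj"] by linarith
    then have "real (card X) - 1 \<ge> real (card Fj) / real Nbj" by simp
    then have B: "(real (card X) - 1) * real Nbj \<ge> real (card Fj)"
      using Nb1 by (simp add: divide_le_eq)
    have "real (card Fj) \<ge> 1 + (real (card X) - 1) * real Nbj"
      using A \<open>card X \<ge> 1\<close> by (metis of_nat_1 of_nat_add of_nat_diff of_nat_le_iff of_nat_mult)
    then show False using B by linarith
  qed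
  then obtain a where a: "a \<in> X" "a \<noteq> b" "card (fst a) < Nbj" by blast
  have aS: "a \<in> set S" and bS: "b \<in> set S" using a(1) b(1) XS by blast+
  have sab: "snd a < snd b"
  proof -
    have "snd a \<le> snd b" using b(2) a(1) by blast
    moreover have "snd a \<noteq> snd b" using starts_distinct[OF FS aS bS] a(2) by blast
    ultimately show ?thesis by simp
  qed
  obtain x where xb: "x \<in> fst b" using fs_elem(1)[OF FS bS] by blast
  have fx: "f x = j" using famX[OF b(1) xb] .
  have xn: "x \<in> {1..n}" using fs_elem(2)[OF FS bS] xb by blast
  obtain ia where ia: "ia \<in> fst a" "f ia = j" using a(1) unfolding X_def by blast
  have xnot: "y \<in> set S \<Longrightarrow> y \<noteq> b \<Longrightarrow> x \<notin> fst y" for y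
    using fs_pair(1)[OF FS _ bS] xb by blast
  have xa: "x \<notin> fst a" using xnot[OF aS a(2)] .
  define h where "h y = (if y = a then (insert x (fst a), snd a) else if y = b then (fst b - {x}, snd b) else y)" for y
  have hsnd: "snd (h y) = snd y" for y unfolding h_def by simp
  have hmem: "i \<in> fst (h y) \<longleftrightarrow> (i \<in> fst y \<and> i \<noteq> x) \<or> (i = x \<and> y = a)" if y: "y \<in> set S" for y i
  proof (cases "y = a")
    case True
    then show ?thesis unfolding h_def using xa by auto
  next
    case False
    show ?thesis
    proof (cases "y = b")
      case True
      then show ?thesis unfolding h_def using False by auto
    next
      case False2: False
      then show ?thesis unfolding h_def using False xnot[OF y False2] by auto
    qed
  qed
  have hfam: "\<exists>i0\<in>fst y. f i0 = f i" if y: "y \<in> set S" and i: "i \<in> fst (h y)" for y i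
  proof -
    have "(i \<in> fst y \<and> i \<noteq> x) \<or> (i = x \<and> y = a)" using hmem[OF y] i by blast
    then show ?thesis
    proof
      assume "i \<in> fst y \<and> i \<noteq> x" then show ?thesis by blast
    next
      assume "i = x \<and> y = a" then show ?thesis using ia fx by auto
    qed
  qed
  have hsub: "fst (h y) \<subseteq> {1..n}" if y: "y \<in> set S" for y
    using hmem[OF y] fs_elem(2)[OF FS y] xn by blast
  have injh: "inj_on h (set S)"
  proof (rule inj_onI)
    fix y z assume "y \<in> set S" "z \<in> set S" "h y = h z"
    then show "y = z" using starts_distinct[OF FS] hsnd by metis
  qed
  define T where "T = filter (\<lambda>t. fst t \<noteq> {}) (map h S)"
  have setT: "set T = {t \<in> h ` set S. fst t \<noteq> {}}" unfolding T_def by auto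
  have distT: "distinct T" unfolding T_def using DS injh by (simp add: distinct_map)
  have ha: "h a = (insert x (fst a), snd a)" unfolding h_def by simp
  have haT: "h a \<in> set T"
  proof -
    have "h a \<in> h ` set S" using aS by blast
    moreover have "fst (h a) \<noteq> {}" by (simp add: ha)
    ultimately show ?thesis unfolding setT by blast
  qed
  have FT: "feas_set n f q v V T"
    unfolding feas_set_def
  proof (intro conjI)
    show "distinct T" by (rule distT)
    show "\<forall>t\<in>set T. fst t \<noteq> {} \<and> fst t \<subseteq> {1..n} \<and> (\<forall>i\<in>fst t. \<forall>i'\<in>fst t. f i = f i')
        \<and> (\<Sum>i\<in>fst t. v i) \<le> V \<and> 0 \<le> snd t"
    proof
      fix t assume "t \<in> set T"
      then obtain y where y: "y \<in> set S" "t = h y" "fst t \<noteq> {}" unfolding setT by blast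
      have s1: "fst t \<subseteq> {1..n}" using hsub y by blast
      have s2: "\<forall>i\<in>fst t. \<forall>i'\<in>fst t. f i = f i'"
      proof (intro ballI)
        fix i i' assume "i \<in> fst t" "i' \<in> fst t"
        then obtain i0 i0' where "i0 \<in> fst y" "f i0 = f i" "i0' \<in> fst y" "f i0' = f i'"
          using hfam y by metis
        then show "f i = f i'" using fs_elem(3)[OF FS y(1)] by metis
      qed
      have s3: "(\<Sum>i\<in>fst t. v i) \<le> V"
      proof (cases "y = a")
        case True
        then have ft: "fst t = insert x (fst a)" using y ha by simp
        show ?thesis unfolding ft
        proof (rule Nb_fit[OF v_bounds])
          show "insert x (fst a) \<subseteq> fam_jobs n f j"
            using fs_elem(2)[OF FS aS] famX[OF a(1)] fx xn unfolding fam_jobs_def by auto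
          show "insert x (fst a) \<noteq> {}" by simp
          show "card (insert x (fst a)) \<le> Nb n f v V j"
            using a(3) xa finy[OF aS] unfolding Nbj_def by simp
        qed
      next
        case False
        have sub: "fst t \<subseteq> fst y" using hmem[OF y(1)] False y(2) by blast
        have "(\<Sum>i\<in>fst t. v i) \<le> (\<Sum>i\<in>fst y. v i)"
        proof (rule sum_mono2[OF finy[OF y(1)] sub])
          fix i assume "i \<in> fst y - fst t"
          then show "0 \<le> v i" using fs_elem(2)[OF FS y(1)] v_bounds by blast
        qed
        then show ?thesis using fs_elem(4)[OF FS y(1)] by linarith
      qed
      have s4: "0 \<le> snd t" using y hsnd fs_elem(5)[OF FS y(1)] by simp
      show "fst t \<noteq> {} \<and> fst t \<subseteq> {1..n} \<and> (\<forall>i\<in>fst t. \<forall>i'\<in>fst t. f i = f i')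
        \<and> (\<Sum>i\<in>fst t. v i) \<le> V \<and> 0 \<le> snd t" using y(3) s1 s2 s3 s4 by blast
    qed
    show "\<Union>(fst ` set T) = {1..n}"
    proof
      show "\<Union>(fst ` set T) \<subseteq> {1..n}" using hsub unfolding setT by blast
      show "{1..n} \<subseteq> \<Union>(fst ` set T)"
      proof
        fix i assume "i \<in> {1..n}"
        then obtain y where y: "y \<in> set S" "i \<in> fst y" using fs_cover[OF FS] by blast
        show "i \<in> \<Union>(fst ` set T)"
        proof (cases "i = x")
          case True
          then show ?thesis using haT ha by force
        next
          case False
          then have "i \<in> fst (h y)" using hmem[OF y(1)] y(2) by blast
          then have "h y \<in> set T" unfolding setT using y(1) by blast
          then show ?thesis using \<open>i \<in> fst (h y)\<close> by blast
        qed
      qed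
    qed
    show "\<forall>t1\<in>set T. \<forall>t2\<in>set T. t1 \<noteq> t2 \<longrightarrow> fst t1 \<inter> fst t2 = {}
        \<and> (\<forall>i\<in>fst t1. \<forall>i'\<in>fst t2. snd t1 + q (f i) \<le> snd t2 \<or> snd t2 + q (f i') \<le> snd t1)"
    proof (intro ballI impI)
      fix t1 t2 assume t: "t1 \<in> set T" "t2 \<in> set T" "t1 \<noteq> t2"
      obtain y where y: "y \<in> set S" "t1 = h y" using t(1) unfolding setT by blast
      obtain z where z: "z \<in> set S" "t2 = h z" using t(2) unfolding setT by blast
      have yz: "y \<noteq> z" using t(3) y z by blast
      have dj: "fst y \<inter> fst z = {}" using fs_pair(1)[OF FS y(1) z(1) yz] .
      have "fst t1 \<inter> fst t2 = {}"
      proof (rule ccontr)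
        assume "fst t1 \<inter> fst t2 \<noteq> {}"
        then obtain i where "i \<in> fst (h y)" "i \<in> fst (h z)" using y z by blast
        then have "(i \<in> fst y \<and> i \<noteq> x) \<or> (i = x \<and> y = a)" "(i \<in> fst z \<and> i \<noteq> x) \<or> (i = x \<and> z = a)"
          using hmem y(1) z(1) by blast+
        then show False using dj yz by blast
      qed
      moreover have "\<forall>i\<in>fst t1. \<forall>i'\<in>fst t2. snd t1 + q (f i) \<le> snd t2 \<or> snd t2 + q (f i') \<le> snd t1"
      proof (intro ballI)
        fix i i' assume ii: "i \<in> fst t1" "i' \<in> fst t2"
        obtain i0 where i0: "i0 \<in> fst y" "f i0 = f i" using hfam[OF y(1)] ii(1) y(2) by blast
        obtain i0' where i0': "i0' \<in> fst z" "f i0' = f i'" using hfam[OF z(1)] ii(2) z(2) by blast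
        have "snd y + q (f i0) \<le> snd z \<or> snd z + q (f i0') \<le> snd y"
          using fs_pair(2)[OF FS y(1) z(1) yz] i0(1) i0'(1) by blast
        then show "snd t1 + q (f i) \<le> snd t2 \<or> snd t2 + q (f i') \<le> snd t1"
          using y(2) z(2) hsnd i0(2) i0'(2) by metis
      qed
      ultimately show "fst t1 \<inter> fst t2 = {}
        \<and> (\<forall>i\<in>fst t1. \<forall>i'\<in>fst t2. snd t1 + q (f i) \<le> snd t2 \<or> snd t2 + q (f i') \<le> snd t1)" by blast
    qed
  qed
  have costT: "cost w f q T = cost w f q S + w x * (snd a - snd b)" for w
  proof -
    have "cost w f q T = (\<Sum>t\<in>set T. bcost w f q t)" using cost_set[OF distT] .
    also have "\<dots> = (\<Sum>t\<in>h ` set S. bcost w f q t)"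
    proof (rule sum.mono_neutral_left)
      show "finite (h ` set S)" by simp
      show "set T \<subseteq> h ` set S" unfolding setT by blast
      show "\<forall>t\<in>h ` set S - set T. bcost w f q t = 0" unfolding setT bcost_def by auto
    qed
    also have "\<dots> = (\<Sum>y\<in>set S. bcost w f q (h y))" using sum.reindex[OF injh] by simp
    also have "\<dots> = (\<Sum>y\<in>set S. bcost w f q y + ((if y = a then w x * (snd a + q (f x)) else 0)
                       - (if y = b then w x * (snd b + q (f x)) else 0)))"
    proof (rule sum.cong[OF refl])
      fix y assume y: "y \<in> set S"
      show "bcost w f q (h y) = bcost w f q y + ((if y = a then w x * (snd a + q (f x)) else 0)
                       - (if y = b then w x * (snd b + q (f x)) else 0))"
      proof (cases "y = a")
        case True
        then show ?thesis unfolding bcost_def h_def using a(2) xa finy[OF aS] by simp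
      next
        case False
        show ?thesis
        proof (cases "y = b")
          case True
          then show ?thesis unfolding bcost_def h_def using False a(2) xb finy[OF bS]
            by (simp add: sum_diff1)
        next
          case False2: False
          then show ?thesis unfolding bcost_def h_def using False by simp
        qed
      qed
    qed
    also have "\<dots> = (\<Sum>y\<in>set S. bcost w f q y) + w x * (snd a + q (f x)) - w x * (snd b + q (f x))"
      using aS bS by (simp add: sum.distrib sum_subtractf)
    also have "\<dots> = cost w f q S + w x * (snd a - snd b)"
      using cost_set[OF DS] by (simp add: algebra_simps)
    finally show ?thesis .
  qed
  show ?thesis
  proof (intro exI conjI allI impI)
    show "feasible n f q v V T" using FT feasible_iff by blast
    fix w :: "nat \<Rightarrow> real" assume "\<forall>i\<in>{1..n}. 0 \<le> w i"
    then have "0 \<le> w x" using xn by blast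
    then have "w x * (snd a - snd b) \<le> 0" using sab by (simp add: mult_nonneg_nonpos)
    then show "cost w f q T \<le> cost w f q S" using costT by simp
  next
    show "cost (\<lambda>_. 1) f q T < cost (\<lambda>_. 1) f q S" using costT[of "\<lambda>_. 1"] sab by simp
  qed
qed

end

lemma (in sched) exists_feasible: "\<exists>S. feasible n f q v V S"
proof -
  define P where "P k = (\<Sum>l<k. q (f (Suc l)))" for k
  define S0 where "S0 = map (\<lambda>k. ({Suc k}, P k)) [0..<n]"
  have len: "length S0 = n" unfolding S0_def by simp
  have S0k: "k < n \<Longrightarrow> S0!k = ({Suc k}, P k)" for k unfolding S0_def by simp
  have qp: "l < n \<Longrightarrow> 0 < q (f (Suc l))" for l using qpos by simp
  have Pmono: "P k \<le> P l" if "k \<le> l" "l \<le> n" for k l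
    unfolding P_def
  proof (rule sum_mono2)
    show "finite {..<l}" by simp
    show "{..<k} \<subseteq> {..<l}" using that by auto
    fix b assume "b \<in> {..<l} - {..<k}"
    then have "b < n" using that by auto
    then show "0 \<le> q (f (Suc b))" using qp[of b] by linarith
  qed
  have PSuc: "P (Suc k) = P k + q (f (Suc k))" for k unfolding P_def by simp
  have "feasible n f q v V S0"
    unfolding feasible_def len
  proof (intro conjI)
    show "\<forall>k<n. fst (S0!k) \<noteq> {} \<and> fst (S0!k) \<subseteq> {1..n}
        \<and> (\<forall>i\<in>fst (S0!k). \<forall>i'\<in>fst (S0!k). f i = f i')
        \<and> (\<Sum>i\<in>fst (S0!k). v i) \<le> V \<and> 0 \<le> snd (S0!k)"
    proof (intro allI impI)
      fix k assume k: "k < n"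
      have "0 \<le> P k" using Pmono[of 0 k] k unfolding P_def by simp
      moreover have "v (Suc k) \<le> V" using v_bounds k by simp
      ultimately show "fst (S0!k) \<noteq> {} \<and> fst (S0!k) \<subseteq> {1..n}
        \<and> (\<forall>i\<in>fst (S0!k). \<forall>i'\<in>fst (S0!k). f i = f i')
        \<and> (\<Sum>i\<in>fst (S0!k). v i) \<le> V \<and> 0 \<le> snd (S0!k)" using S0k[OF k] k by simp
    qed
    have "(\<Union>k<n. fst (S0!k)) = (\<Union>k<n. {Suc k})" using S0k by simp
    also have "\<dots> = Suc ` {..<n}" by blast
    also have "\<dots> = {1..n}" by (rule image_Suc_lessThan)
    finally show "(\<Union>k<n. fst (S0!k)) = {1..n}" .
    show "\<forall>k<n. \<forall>l<n. k \<noteq> l \<longrightarrow>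
        fst (S0!k) \<inter> fst (S0!l) = {}
        \<and> (\<forall>i\<in>fst (S0!k). \<forall>i'\<in>fst (S0!l).
              snd (S0!k) + q (f i) \<le> snd (S0!l) \<or> snd (S0!l) + q (f i') \<le> snd (S0!k))"
    proof (intro allI impI)
      fix k l assume kl: "k < n" "l < n" "k \<noteq> l"
      have "P k + q (f (Suc k)) \<le> P l \<or> P l + q (f (Suc l)) \<le> P k"
      proof (cases "k < l")
        case True
        then show ?thesis using Pmono[of "Suc k" l] kl PSuc[of k] by simp
      next
        case False
        then have "l < k" using kl by simp
        then show ?thesis using Pmono[of "Suc l" k] kl PSuc[of l] by simp
      qed
      then show "fst (S0!k) \<inter> fst (S0!l) = {}
        \<and> (\<forall>i\<in>fst (S0!k). \<forall>i'\<in>fst (S0!l).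
              snd (S0!k) + q (f i) \<le> snd (S0!l) \<or> snd (S0!l) + q (f i') \<le> snd (S0!k))"
        using S0k kl by simp
    qed
  qed
  then show ?thesis by blast
qed

theorem mainTheorem1:
  fixes n m :: nat and f :: "nat \<Rightarrow> nat" and q :: "nat \<Rightarrow> real"
    and v w :: "nat \<Rightarrow> real" and V :: real
  assumes fam: "\<forall>i\<in>{1..n}. f i \<in> {1..m}"
    and q_pos: "\<forall>j\<in>{1..m}. q j > 0"
    and w_nonneg: "\<forall>i\<in>{1..n}. w i \<ge> 0"
    and v_bounds: "\<forall>i\<in>{1..n}. 0 \<le> v i \<and> v i \<le> V"
  shows "\<exists>S. optimal n f q v w V S \<and>
           (\<forall>j\<in>{1..m}. int (num_batches f S j) \<le> Bj n f v V j)"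
proof -
  have loc: "sched n m f q v V" unfolding sched_def using fam q_pos v_bounds by blast
  interpret sched n m f q v V by (rule loc)
  define LS where "LS = {L. set L \<subseteq> Pow {1..n} \<and> length L \<le> n}"
  define Fs where "Fs = {S. feasible n f q v V S \<and> S \<in> comp f q ` LS}"
  have finFs: "finite Fs"
  proof -
    have "finite LS" unfolding LS_def by (rule finite_lists_length_le) simp
    then have "finite (comp f q ` LS)" by simp
    then show ?thesis unfolding Fs_def by (rule finite_subset[rotated]) blast
  qed
  have comp': "\<exists>S'. S' \<in> Fs \<and> (\<forall>w. (\<forall>i\<in>{1..n}. 0 \<le> w i) \<longrightarrow> cost w f q S' \<le> cost w f q S)"
    if "feasible n f q v V S" for S
    using compress[OF that] unfolding Fs_def LS_def by blast
  obtain S0 where "feasible n f q v V S0" using exists_feasible by blast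
  then obtain S00 where "S00 \<in> Fs" using comp' by blast
  then have Fsne: "Fs \<noteq> {}" by blast
  define c0 where "c0 = Min (cost w f q ` Fs)"
  define M where "M = {S \<in> Fs. cost w f q S = c0}"
  have c0le: "S \<in> Fs \<Longrightarrow> c0 \<le> cost w f q S" for S unfolding c0_def using finFs by simp
  have "c0 \<in> cost w f q ` Fs" unfolding c0_def using finFs Fsne by simp
  then have Mne: "M \<noteq> {}" unfolding M_def by auto
  have finM: "finite M" unfolding M_def using finFs by simp
  define c1 where "c1 = Min (cost (\<lambda>_. 1) f q ` M)"
  have "c1 \<in> cost (\<lambda>_. 1) f q ` M" unfolding c1_def using finM Mne by simp
  then obtain Sopt where So: "Sopt \<in> M" "cost (\<lambda>_. 1) f q Sopt = c1" by auto
  have c1le: "S \<in> M \<Longrightarrow> c1 \<le> cost (\<lambda>_. 1) f q S" for S unfolding c1_def using finM by simp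
  have FSo: "feasible n f q v V Sopt" using So(1) unfolding M_def Fs_def by blast
  have cSo: "cost w f q Sopt = c0" using So(1) unfolding M_def by blast
  have one: "\<forall>i\<in>{1..n}. 0 \<le> (\<lambda>_. 1::real) i" by simp
  have opt: "optimal n f q v w V Sopt"
    unfolding optimal_def
  proof (intro conjI allI impI)
    show "feasible n f q v V Sopt" by (rule FSo)
    fix S' assume "feasible n f q v V S'"
    then obtain S'' where "S'' \<in> Fs" "cost w f q S'' \<le> cost w f q S'" using comp' w_nonneg by blast
    then show "cost w f q Sopt \<le> cost w f q S'" using c0le cSo by fastforce
  qed
  have bnd: "\<forall>j\<in>{1..m}. int (num_batches f Sopt j) \<le> Bj n f v V j"
  proof (rule ballI, rule ccontr)
    fix j assume "j \<in> {1..m}" "\<not> int (num_batches f Sopt j) \<le> Bj n f v V j"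
    then have "int (num_batches f Sopt j) > Bj n f v V j" by simp
    then obtain T where T: "feasible n f q v V T"
      "\<forall>w. (\<forall>i\<in>{1..n}. 0 \<le> w i) \<longrightarrow> cost w f q T \<le> cost w f q Sopt"
      "cost (\<lambda>_. 1) f q T < cost (\<lambda>_. 1) f q Sopt"
      using improve[OF FSo] by blast
    obtain T' where T': "T' \<in> Fs" "\<forall>w. (\<forall>i\<in>{1..n}. 0 \<le> w i) \<longrightarrow> cost w f q T' \<le> cost w f q T"
      using comp'[OF T(1)] by blast
    have "cost w f q T' \<le> c0" using T(2) T'(2) w_nonneg cSo by fastforce
    then have "T' \<in> M" using c0le[OF T'(1)] T'(1) unfolding M_def by simp
    then have "c1 \<le> cost (\<lambda>_. 1) f q T'" by (rule c1le)
    moreover have "cost (\<lambda>_. 1) f q T' \<le> cost (\<lambda>_. 1) f q T" using spec[OF T'(2), of "\<lambda>_. 1::real"] by simp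
    ultimately show False using T(3) So(2) by linarith
  qed
  show ?thesis using opt bnd by blast
qed

end
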